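(* For each of the following sets $\mathcal S\subseteq\{0,1\}^3$, and for every set obtained from it by any sequence of coordinate negations and coordinate permutations, $\rho(\mathcal S)=1$: $\{000,001\}$, $\{000,001,110\}$, $\{000,001,110,111\}$, $\{000,011,101\}$, $\{000,011,101,110\}$.
   Context: Binary triples $(x_1,x_2,x_3)\in\{0,1\}^3$ are written $x_1x_2x_3$. Let $\mathcal S\subseteq\{0,1\}^3$ be nonempty. A distribution scheme with domain $\mathcal S$ is a pair $(P_R,\psi)$ where $P_R$ is a probability distribution on a finite set $\mathcal R$ and $\psi:\mathcal S\times\mathcal R\to\mathcal W_{12}\times\mathcal W_{23}\times\mathcal W_{31}$ for finite share alphabets. Given $\mathbf x=(x_1,x_2,x_3)\in\mathcal S$, the shares are $(W_{12},W_{23},W_{31})=\psi(\mathbf x,R)$, $R\sim P_R$. Party $P_1$ sees $V_1=(W_{12},W_{31})$, $P_2$ sees $V_2=(W_{23},W_{12})$, $P_3$ sees $V_3=(W_{31},W_{23})$. It is a 3SS scheme if (Correctness) for each $i$ there is a function $\phi_i$ with $\Pr[\phi_i(V_i)=x_i]=1$ for every $\mathbf x\in\mathcal S$, and (Perfect privacy) for each $i$ and all $\mathbf x,\mathbf x'\in\mathcal S$ with $x_i=x'_i$, $V_i$ has the same distribution under secret $\mathbf x$ as under $\mathbf x'$. The randomness complexity $\rho(\mathcal S)$ is the minimum of $\log_2|\mathcal R|$ over all 3SS schemes with domain $\mathcal S$. A coordinate negation maps $\mathcal S$ to $\{\mathbf x\oplus e_i:\mathbf x\in\mathcal S\}$;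 a coordinate permutation permutes the three coordinates of every element. *)

theory Defs
  imports Complex_Main "HOL-Combinatorics.Permutations"
begin

text \<open>Binary triples x1x2x3 are elements of bool \<times> bool \<times> bool; True encodes 1.\<close>
type_synonym triple = "bool \<times> bool \<times> bool"

definition get :: "nat \<Rightarrow> triple \<Rightarrow> bool" where
  "get i x = (if i = 1 then fst x else if i = 2 then fst (snd x) else snd (snd x))"

definition mk :: "(nat \<Rightarrow> bool) \<Rightarrow> triple" where
  "mk f = (f 1, f 2, f 3)"

definition negate_coord :: "nat \<Rightarrow> triple set \<Rightarrow> triple set" where
  "negate_coord i S = (\<lambda>x. mk (\<lambda>j. if j = i then \<not> get j x else get j x)) ` S"

definition permute_coords :: "(nat \<Rightarrow> nat) \<Rightarrow> triple set \<Rightarrow> triple set" where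
  "permute_coords \<sigma> S = (\<lambda>x. mk (\<lambda>j. get (\<sigma> j) x)) ` S"

inductive_set equiv_class :: "triple set \<Rightarrow> triple set set" for S where
  base: "S \<in> equiv_class S"
| neg: "T \<in> equiv_class S \<Longrightarrow> i \<in> {1,2,3} \<Longrightarrow> negate_coord i T \<in> equiv_class S"
| perm: "T \<in> equiv_class S \<Longrightarrow> \<sigma> permutes {1,2,3} \<Longrightarrow> permute_coords \<sigma> T \<in> equiv_class S"

definition view :: "nat \<Rightarrow> nat \<times> nat \<times> nat \<Rightarrow> nat \<times> nat" where
  "view i w = (case w of (w12, w23, w31) \<Rightarrow>
      if i = 1 then (w12, w31) else if i = 2 then (w23, w12) else (w31, w23))"

text \<open>A 3SS scheme with domain S: randomness set R (a finite set, WLOG of naturals),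
  distribution P on R, and share map \<psi>.\<close>
definition is_3SS ::
  "triple set \<Rightarrow> nat set \<Rightarrow> (nat \<Rightarrow> real) \<Rightarrow> (triple \<Rightarrow> nat \<Rightarrow> nat \<times> nat \<times> nat) \<Rightarrow> bool" where
  "is_3SS S R P \<psi> \<longleftrightarrow>
     finite R \<and> (\<forall>r\<in>R. 0 \<le> P r) \<and> sum P R = 1 \<and>
     (\<forall>i\<in>{1,2,3}. \<exists>\<phi> :: nat \<times> nat \<Rightarrow> bool.
        \<forall>x\<in>S. sum P {r\<in>R. \<phi> (view i (\<psi> x r)) = get i x} = 1) \<and>
     (\<forall>i\<in>{1,2,3}. \<forall>x\<in>S. \<forall>x'\<in>S. get i x = get i x' \<longrightarrow>
        (\<forall>v. sum P {r\<in>R. view i (\<psi> x r) = v} = sum P {r\<in>R. view i (\<psi> x' r) = v}))"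

definition rho :: "triple set \<Rightarrow> real" where
  "rho S = Inf {log 2 (real (card R)) | R P \<psi>. is_3SS S R P \<psi>}"

end

theory Submission imports Defs begin

definition D1 :: "triple \<Rightarrow> triple \<Rightarrow> bool" where
 "D1 x y \<longleftrightarrow> (case x of (a,b,c) \<Rightarrow> case y of (a',b',c') \<Rightarrow>
    ((a\<noteq>a') \<and> (b=b') \<and> (c=c')) \<or> ((a=a') \<and> (b\<noteq>b') \<and> (c=c')) \<or> ((a=a') \<and> (b=b') \<and> (c\<noteq>c')))"

definition T2 :: "triple \<Rightarrow> triple \<Rightarrow> bool" where
 "T2 x y \<longleftrightarrow> (case x of (a,b,c) \<Rightarrow> case y of (a',b',c') \<Rightarrow>
    ((a\<noteq>a') \<and> (b\<noteq>b') \<and> (c=c')) \<or> ((a=a') \<and> (b\<noteq>b') \<and> (c\<noteq>c')) \<or> ((a\<noteq>a') \<and> (b=b') \<and> (c\<noteq>c')))"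

definition L :: "triple set \<Rightarrow> bool" where
 "L S \<longleftrightarrow> (\<exists>x\<in>S. \<exists>y\<in>S. D1 x y \<or> (\<exists>z\<in>S. T2 x y \<and> T2 y z \<and> T2 x z))"

lemma get_simps[simp]: "get 1 (a,b,c) = a" "get 2 (a,b,c) = b" "get 3 (a,b,c) = c"
  by (simp_all add: get_def)

lemma get_Suc0[simp]: "get (Suc 0) (a,b,c) = a" by (simp add: get_def)

lemma perm_cases:
  assumes "\<sigma> permutes {1::nat,2,3}"
  shows "(\<sigma> 1, \<sigma> 2, \<sigma> 3) \<in> {(1,2,3),(1,3,2),(2,1,3),(2,3,1),(3,1,2),(3,2,1)}"
proof -
  have a: "\<sigma> i \<in> {1,2,3}" if "i \<in> {1,2,3}" for i
    using permutes_in_image[OF assms] that by blast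
  have i: "inj \<sigma>" using permutes_inj[OF assms] .
  have "\<sigma> 1 \<noteq> \<sigma> 2" "\<sigma> 1 \<noteq> \<sigma> 3" "\<sigma> 2 \<noteq> \<sigma> 3" using i by (simp_all add: inj_eq)
  moreover have "\<sigma> 1 = 1 \<or> \<sigma> 1 = 2 \<or> \<sigma> 1 = 3" "\<sigma> 2 = 1 \<or> \<sigma> 2 = 2 \<or> \<sigma> 2 = 3"
     "\<sigma> 3 = 1 \<or> \<sigma> 3 = 2 \<or> \<sigma> 3 = 3" using a by auto
  ultimately show ?thesis by (elim disjE) simp_all
qed

lemma neg_eq:
  "negate_coord 1 S = (\<lambda>(a,b,c). (\<not>a,b,c)) ` S"
  "negate_coord 2 S = (\<lambda>(a,b,c). (a,\<not>b,c)) ` S"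
  "negate_coord 3 S = (\<lambda>(a,b,c). (a,b,\<not>c)) ` S"
  by (auto simp: negate_coord_def mk_def get_def split: prod.splits intro!: image_cong)

lemma perm_eq:
  "permute_coords \<sigma> S = (\<lambda>x. (get (\<sigma> 1) x, get (\<sigma> 2) x, get (\<sigma> 3) x)) ` S"
  by (simp add: permute_coords_def mk_def)


definition q :: "nat \<Rightarrow> triple \<Rightarrow> bool" where
 "q k x = (case x of (a,b,c) \<Rightarrow> (if k = 0 then ((a \<noteq> b) \<noteq> c) else if k = 1 then (a \<noteq> b)
     else if k = 2 then (b \<noteq> c) else (c \<noteq> a)))"

definition U' :: "triple set \<Rightarrow> bool" where
 "U' S \<longleftrightarrow> (\<exists>k\<in>{0,1,2,3}. \<forall>x\<in>S. \<forall>y\<in>S. q k x = q k y)"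

lemma ball_img: "(\<forall>y\<in>g`S. P y) = (\<forall>x\<in>S. P (g x))" by blast
lemma bex_img: "(\<exists>y\<in>g`S. P y) = (\<exists>x\<in>S. P (g x))" by blast


lemma U_pres:
  assumes "\<forall>k\<in>{0,1,2,3}. \<exists>k'\<in>{0,1,2,3}. \<exists>c. \<forall>x. q k' (g x) = (q k x \<noteq> c)"
  and "U' S" shows "U' (g ` S)"
proof -
  from assms(2) obtain k where k: "k\<in>{0,1,2,3}" "\<forall>x\<in>S. \<forall>y\<in>S. q k x = q k y" unfolding U'_def by blast
  from assms(1) k(1) obtain k' c where k': "k'\<in>{0,1,2,3}" "\<forall>x. q k' (g x) = (q k x \<noteq> c)" by blast
  show ?thesis unfolding U'_def ball_img
  proof (intro bexI[of _ k'] ballI)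
    fix x y assume "x\<in>S" "y\<in>S" then show "q k' (g x) = q k' (g y)" using k(2) k'(2) by metis
  qed (rule k'(1))
qed

lemma L_pres:
  assumes "\<And>x y. D1 (g x) (g y) = D1 x y" "\<And>x y. T2 (g x) (g y) = T2 x y"
  and "L S" shows "L (g ` S)"
  using assms unfolding L_def bex_img by metis

definition Inv where "Inv S \<longleftrightarrow> U' S \<and> L S"

lemma Inv_pres:
  fixes g :: "triple \<Rightarrow> triple"
  assumes "\<forall>k\<in>{0,1,2,3}. \<exists>k'\<in>{0,1,2,3}. \<exists>c. \<forall>a b d. q k' (g (a,b,d)) = (q k (a,b,d) \<noteq> c)"
   "\<forall>a b c a' b' c'. D1 (g (a,b,c)) (g (a',b',c')) = D1 (a,b,c) (a',b',c')"
   "\<forall>a b c a' b' c'. T2 (g (a,b,c)) (g (a',b',c')) = T2 (a,b,c) (a',b',c')"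
   "Inv S" shows "Inv (g ` S)"
  using assms unfolding Inv_def
  by (metis L_pres U_pres prod_cases3)

lemma Inv_neg1: "Inv S \<Longrightarrow> Inv ((\<lambda>(a,b,c). (\<not>a,b,c)) ` S)"
  by (rule Inv_pres) (simp_all add: q_def D1_def T2_def Let_def ex_bool_eq all_bool_eq)

lemma Inv_neg2: "Inv S \<Longrightarrow> Inv ((\<lambda>(a,b,c). (a,\<not>b,c)) ` S)"
  by (rule Inv_pres) (simp_all add: q_def D1_def T2_def Let_def ex_bool_eq all_bool_eq)

lemma Inv_neg3: "Inv S \<Longrightarrow> Inv ((\<lambda>(a,b,c). (a,b,\<not>c)) ` S)"
  by (rule Inv_pres) (simp_all add: q_def D1_def T2_def Let_def ex_bool_eq all_bool_eq)

lemma Inv_p123: "Inv S \<Longrightarrow> Inv ((\<lambda>(a,b,c). (a,b,c)) ` S)"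
  by (rule Inv_pres) (simp_all add: q_def D1_def T2_def Let_def ex_bool_eq all_bool_eq)

lemma Inv_p132: "Inv S \<Longrightarrow> Inv ((\<lambda>(a,b,c). (a,c,b)) ` S)"
  by (rule Inv_pres) (simp_all add: q_def D1_def T2_def Let_def ex_bool_eq all_bool_eq)

lemma Inv_p213: "Inv S \<Longrightarrow> Inv ((\<lambda>(a,b,c). (b,a,c)) ` S)"
  by (rule Inv_pres) (simp_all add: q_def D1_def T2_def Let_def ex_bool_eq all_bool_eq)

lemma Inv_p231: "Inv S \<Longrightarrow> Inv ((\<lambda>(a,b,c). (b,c,a)) ` S)"
  by (rule Inv_pres) (simp_all add: q_def D1_def T2_def Let_def ex_bool_eq all_bool_eq)

lemma Inv_p312: "Inv S \<Longrightarrow> Inv ((\<lambda>(a,b,c). (c,a,b)) ` S)"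
  by (rule Inv_pres) (simp_all add: q_def D1_def T2_def Let_def ex_bool_eq all_bool_eq)

lemma Inv_p321: "Inv S \<Longrightarrow> Inv ((\<lambda>(a,b,c). (c,b,a)) ` S)"
  by (rule Inv_pres) (simp_all add: q_def D1_def T2_def Let_def ex_bool_eq all_bool_eq)


lemma Inv_perm:
  assumes "\<sigma> permutes {1,2,3}" "Inv T" shows "Inv (permute_coords \<sigma> T)"
proof -
  have e: "permute_coords \<sigma> T = (\<lambda>(a,b,c). (get (\<sigma> 1) (a,b,c), get (\<sigma> 2) (a,b,c), get (\<sigma> 3) (a,b,c))) ` T"
    unfolding perm_eq by (intro image_cong) auto
  from perm_cases[OF assms(1)] show ?thesis unfolding e
    using Inv_p123[OF assms(2)] Inv_p132[OF assms(2)] Inv_p213[OF assms(2)]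
      Inv_p231[OF assms(2)] Inv_p312[OF assms(2)] Inv_p321[OF assms(2)]
    by (elim insertE emptyE) simp_all
qed

lemma Inv_neg:
  assumes "i \<in> {1,2,3}" "Inv T" shows "Inv (negate_coord i T)"
  using assms(1) Inv_neg1[OF assms(2)] Inv_neg2[OF assms(2)] Inv_neg3[OF assms(2)]
  unfolding neg_eq[symmetric] by (elim insertE emptyE) simp_all

lemma Inv_class:
  assumes "Inv S0" "S \<in> equiv_class S0" shows "Inv S"
  using assms(2) by induct (auto intro: assms(1) Inv_neg Inv_perm)

lemma Inv_base:
  assumes "S0 \<in> {{(False,False,False),(False,False,True)},
                 {(False,False,False),(False,False,True),(True,True,False)},
                 {(False,False,False),(False,False,True),(True,True,False),(True,True,True)},
                 {(False,False,False),(False,True,True),(True,False,True)},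
                 {(False,False,False),(False,True,True),(True,False,True),(True,True,False)}}"
  shows "Inv S0"
  using assms unfolding Inv_def U'_def L_def
  by (elim insertE emptyE) (simp_all add: q_def D1_def T2_def)


lemma sum_two: "sum (\<lambda>_. 1/2::real) {r\<in>{0::nat,1}. Q r} = (if Q 0 then 1/2 else 0) + (if Q 1 then 1/2 else 0)"
  by (subst sum.inter_filter) simp_all

lemma two_scheme:
  assumes c1: "\<forall>x\<in>S. \<forall>r\<in>{0,1}. phiA (view 1 (\<psi> x r)) = get 1 x"
    and c2: "\<forall>x\<in>S. \<forall>r\<in>{0,1}. phiB (view 2 (\<psi> x r)) = get 2 x"
    and c3: "\<forall>x\<in>S. \<forall>r\<in>{0,1}. phiC (view 3 (\<psi> x r)) = get 3 x"
    and priv: "\<And>i x x'. i\<in>{1,2,3} \<Longrightarrow> x\<in>S \<Longrightarrow> x'\<in>S \<Longrightarrow> get i x = get i x' \<Longrightarrow>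
      (view i (\<psi> x 0) = view i (\<psi> x' 0) \<and> view i (\<psi> x 1) = view i (\<psi> x' 1)) \<or>
      (view i (\<psi> x 0) = view i (\<psi> x' 1) \<and> view i (\<psi> x 1) = view i (\<psi> x' 0))"
  shows "is_3SS S {0,1} (\<lambda>_. 1/2) \<psi>"
  unfolding is_3SS_def
proof (intro conjI ballI allI impI)
  show "finite {0::nat,1}" by simp
  show "sum (\<lambda>_. 1/2::real) {0::nat,1} = 1" by simp
  fix r :: nat show "0 \<le> (1/2::real)" by simp
next
  fix i :: nat assume i: "i \<in> {1,2,3}"
  define \<phi> where "\<phi> = (if i = 1 then phiA else if i = 2 then phiB else phiC)"
  have "\<forall>x\<in>S. \<forall>r\<in>{0,1}. \<phi> (view i (\<psi> x r)) = get i x"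
    using i c1 c2 c3 unfolding \<phi>_def by auto
  then show "\<exists>\<phi>. \<forall>x\<in>S. sum (\<lambda>_. 1/2::real) {r\<in>{0,1}. \<phi> (view i (\<psi> x r)) = get i x} = 1"
    unfolding sum_two by (intro exI[of _ \<phi>]) simp
next
  fix i x x' v assume "i \<in> {1,2,3}" "x\<in>S" "x'\<in>S" "get i x = get i x'"
  from priv[OF this] show "sum (\<lambda>_. 1/2::real) {r\<in>{0,1}. view i (\<psi> x r) = v} = sum (\<lambda>_. 1/2::real) {r\<in>{0,1}. view i (\<psi> x' r) = v}"
    unfolding sum_two by (elim disjE) (simp_all add: add.commute)
qed

definition ob :: "bool \<Rightarrow> nat" where "ob b = (if b then 1 else 0)"
lemma ob_eq[simp]: "(ob a = ob b) = (a = b)" "(ob a = 1) = a" by (auto simp: ob_def)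

definition psi :: "nat \<Rightarrow> triple \<Rightarrow> nat \<Rightarrow> nat \<times> nat \<times> nat" where
 "psi k x r = (case x of (a,b,d) \<Rightarrow> let t = (r = 1) in
    if k = 1 then (ob a, ob t, ob (t \<noteq> d))
    else if k = 2 then (ob (t \<noteq> a), ob b, ob t)
    else if k = 3 then (ob t, ob (t \<noteq> b), ob d)
    else (ob t, ob (t \<noteq> b), ob (t \<noteq> a)))"

lemma pr_lemma:
  assumes "k \<in> {0,1,2,3}" "i \<in> {1,2,3}"
  shows "\<forall>a b d a' b' d'. q k (a,b,d) = c \<longrightarrow> q k (a',b',d') = c \<longrightarrow> get i (a,b,d) = get i (a',b',d') \<longrightarrow>
     (view i (psi k (a,b,d) 0) = view i (psi k (a',b',d') 0) \<and> view i (psi k (a,b,d) 1) = view i (psi k (a',b',d') 1)) \<or>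
      (view i (psi k (a,b,d) 0) = view i (psi k (a',b',d') 1) \<and> view i (psi k (a,b,d) 1) = view i (psi k (a',b',d') 0))"
  using assms by (cases c; elim insertE emptyE; simp add: all_bool_eq psi_def view_def q_def Let_def ob_def)

lemma scheme:
  assumes "k \<in> {0,1,2,3}"
  shows "is_3SS {x. q k x = c} {0,1} (\<lambda>_. 1/2) (psi k)"
proof -
  define f1 :: "nat\<times>nat \<Rightarrow> bool" where "f1 v = (fst v = 1)" for v
  define f2 :: "nat\<times>nat \<Rightarrow> bool" where "f2 v = ((fst v = 1) \<noteq> (snd v = 1))" for v
  define f3 :: "nat\<times>nat \<Rightarrow> bool" where "f3 v = ((snd v = 1) \<noteq> c)" for v
  define f4 :: "nat\<times>nat \<Rightarrow> bool" where "f4 v = (((fst v = 1) \<noteq> (snd v = 1)) \<noteq> c)" for v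
  have pr: "(view i (psi k x 0) = view i (psi k x' 0) \<and> view i (psi k x 1) = view i (psi k x' 1)) \<or>
      (view i (psi k x 0) = view i (psi k x' 1) \<and> view i (psi k x 1) = view i (psi k x' 0))"
    if "i\<in>{1,2,3}" "x\<in>{x. q k x = c}" "x'\<in>{x. q k x = c}" "get i x = get i x'" for i x x'
    using pr_lemma[OF assms that(1), of c] that(2-4) by (cases x; cases x'; simp)
  show ?thesis
  proof (cases "k = 1")
    case True
    show ?thesis by (rule two_scheme[where phiA=f1 and phiB=f3 and phiC=f2])
      (use True pr in \<open>auto simp: psi_def view_def q_def get_def ob_def f1_def f2_def f3_def\<close>)
  next
    case k1: False
    show ?thesis
    proof (cases "k = 2")
      case True
      show ?thesis by (rule two_scheme[where phiA=f2 and phiB=f1 and phiC=f3])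
        (use True pr in \<open>auto simp: psi_def view_def q_def get_def ob_def f1_def f2_def f3_def\<close>)
    next
      case k2: False
      show ?thesis
      proof (cases "k = 3")
        case True
        show ?thesis by (rule two_scheme[where phiA=f3 and phiB=f2 and phiC=f1])
          (use True pr in \<open>auto simp: psi_def view_def q_def get_def ob_def f1_def f2_def f3_def\<close>)
      next
        case False
        with k1 k2 assms have "k = 0" by auto
        then show ?thesis by (intro two_scheme[where phiA=f2 and phiB=f2 and phiC=f4])
          (use pr in \<open>auto simp: psi_def view_def q_def get_def ob_def f1_def f2_def f4_def\<close>)
      qed
    qed
  qed
qed


lemma comb:
  fixes w12 w23 w31 :: "triple \<Rightarrow> nat"
  assumes e1: "\<And>x y. x\<in>S \<Longrightarrow> y\<in>S \<Longrightarrow> fst x = fst y \<Longrightarrow> w12 x = w12 y \<and> w31 x = w31 y"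
    and e2: "\<And>x y. x\<in>S \<Longrightarrow> y\<in>S \<Longrightarrow> fst (snd x) = fst (snd y) \<Longrightarrow> w23 x = w23 y \<and> w12 x = w12 y"
    and e3: "\<And>x y. x\<in>S \<Longrightarrow> y\<in>S \<Longrightarrow> snd (snd x) = snd (snd y) \<Longrightarrow> w31 x = w31 y \<and> w23 x = w23 y"
    and c1: "\<And>x y. x\<in>S \<Longrightarrow> y\<in>S \<Longrightarrow> w12 x = w12 y \<Longrightarrow> w31 x = w31 y \<Longrightarrow> fst x = fst y"
    and c2: "\<And>x y. x\<in>S \<Longrightarrow> y\<in>S \<Longrightarrow> w23 x = w23 y \<Longrightarrow> w12 x = w12 y \<Longrightarrow> fst (snd x) = fst (snd y)"
    and c3: "\<And>x y. x\<in>S \<Longrightarrow> y\<in>S \<Longrightarrow> w31 x = w31 y \<Longrightarrow> w23 x = w23 y \<Longrightarrow> snd (snd x) = snd (snd y)"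
    and "L S"
  shows False
proof -
  obtain x y where xy: "x\<in>S" "y\<in>S" and h: "D1 x y \<or> (\<exists>z\<in>S. T2 x y \<and> T2 y z \<and> T2 x z)"
    using \<open>L S\<close> unfolding L_def by blast
  show False
  proof (cases "D1 x y")
    case True
    obtain a1 a2 a3 where x: "x = (a1,a2,a3)" by (cases x)
    obtain b1 b2 b3 where y: "y = (b1,b2,b3)" by (cases y)
    have "(a1 \<noteq> b1 \<and> a2 = b2 \<and> a3 = b3) \<or> (a1 = b1 \<and> a2 \<noteq> b2 \<and> a3 = b3) \<or> (a1 = b1 \<and> a2 = b2 \<and> a3 \<noteq> b3)"
      using True unfolding x y D1_def by simp
    then show False using e1[OF xy] e2[OF xy] e3[OF xy] c1[OF xy] c2[OF xy] c3[OF xy]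
      unfolding x y fst_conv snd_conv by (elim disjE) metis+
  next
    case False
    with h obtain z where z: "z\<in>S" "T2 x y" "T2 y z" "T2 x z" by blast
    note f = e1[OF xy] e2[OF xy] e3[OF xy] c1[OF xy] c2[OF xy] c3[OF xy]
      e1[OF xy(1) z(1)] e2[OF xy(1) z(1)] e3[OF xy(1) z(1)]
      e1[OF z(1) xy(2)] e2[OF z(1) xy(2)] e3[OF z(1) xy(2)]
      c1[OF xy(1) z(1)] c2[OF xy(1) z(1)] c3[OF xy(1) z(1)]
      c1[OF z(1) xy(2)] c2[OF z(1) xy(2)] c3[OF z(1) xy(2)]
    obtain a1 a2 a3 where x: "x = (a1,a2,a3)" by (cases x)
    obtain b1 b2 b3 where y: "y = (b1,b2,b3)" by (cases y)
    obtain d1 d2 d3 where zz: "z = (d1,d2,d3)" by (cases z)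
    show False using f z(2-4) unfolding x y zz T2_def by simp smt
  qed
qed

lemma is_3SS_mono: "is_3SS T R P \<psi> \<Longrightarrow> S \<subseteq> T \<Longrightarrow> is_3SS S R P \<psi>"
  unfolding is_3SS_def by (meson subsetD)

lemma upper:
  assumes "U' S" shows "\<exists>\<psi>. is_3SS S {0,1} (\<lambda>_. 1/2) \<psi>"
proof -
  from assms obtain k where k: "k\<in>{0,1,2,3}" "\<forall>x\<in>S. \<forall>y\<in>S. q k x = q k y" unfolding U'_def by blast
  show ?thesis
  proof (cases "S = {}")
    case True
    then show ?thesis using scheme[OF k(1), of True] is_3SS_mono by blast
  next
    case False
    then obtain x0 where "x0 \<in> S" by blast
    then have "S \<subseteq> {x. q k x = q k x0}" using k(2) by blast
    then show ?thesis using scheme[OF k(1), of "q k x0"] is_3SS_mono by blast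
  qed
qed

lemma lower:
  assumes sch: "is_3SS S R P \<psi>" and "L S" shows "2 \<le> card R"
proof (rule ccontr)
  assume "\<not> 2 \<le> card R"
  moreover have fin: "finite R" and s1: "sum P R = 1" using sch unfolding is_3SS_def by auto
  moreover have "R \<noteq> {}" using s1 by auto
  ultimately have "card R = 1" using card_0_eq by fastforce
  then obtain r where R: "R = {r}" by (rule card_1_singletonE)
  have ss: "sum P {r'\<in>R. Q r'} = (if Q r then 1 else 0)" for Q
  proof -
    have "{r'\<in>{r}. Q r'} = (if Q r then {r} else {})" by auto
    then show ?thesis using s1 unfolding R by simp
  qed
  have corr: "get i x = get i y" if "i\<in>{1,2,3}" "x\<in>S" "y\<in>S" "view i (\<psi> x r) = view i (\<psi> y r)" for i x y
  proof -
    from sch that(1) obtain \<phi> where "\<forall>x\<in>S. sum P {r\<in>R. \<phi> (view i (\<psi> x r)) = get i x} = 1"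
      unfolding is_3SS_def by blast
    then have "\<phi> (view i (\<psi> x r)) = get i x" "\<phi> (view i (\<psi> y r)) = get i y"
      using that(2,3) unfolding ss by (auto split: if_splits)
    then show ?thesis using that(4) by simp
  qed
  have priv: "view i (\<psi> x r) = view i (\<psi> y r)" if "i\<in>{1,2,3}" "x\<in>S" "y\<in>S" "get i x = get i y" for i x y
  proof -
    from sch have "\<forall>i\<in>{1,2,3}. \<forall>x\<in>S. \<forall>x'\<in>S. get i x = get i x' \<longrightarrow>
        (\<forall>v. sum P {r\<in>R. view i (\<psi> x r) = v} = sum P {r\<in>R. view i (\<psi> x' r) = v})"
      unfolding is_3SS_def by blast
    with that have "sum P {r'\<in>R. view i (\<psi> x r') = view i (\<psi> x r)} = sum P {r'\<in>R. view i (\<psi> y r') = view i (\<psi> x r)}"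
      by blast
    then show ?thesis unfolding ss by (auto split: if_splits)
  qed
  define w12 where "w12 x = fst (\<psi> x r)" for x
  define w23 where "w23 x = fst (snd (\<psi> x r))" for x
  define w31 where "w31 x = snd (snd (\<psi> x r))" for x
  have v: "view 1 (\<psi> x r) = (w12 x, w31 x)" "view 2 (\<psi> x r) = (w23 x, w12 x)" "view 3 (\<psi> x r) = (w31 x, w23 x)" for x
    unfolding view_def w12_def w23_def w31_def by (auto split: prod.splits)
  have g: "get 1 x = fst x" "get 2 x = fst (snd x)" "get 3 x = snd (snd x)" for x
    by (simp_all add: get_def)
  show False
  proof (rule comb[of S w12 w31 w23])
    show "L S" by fact
  next
    fix x y assume "x\<in>S" "y\<in>S" "fst x = fst y" then show "w12 x = w12 y \<and> w31 x = w31 y"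
      using priv[of 1 x y] v g by simp
  next
    fix x y assume "x\<in>S" "y\<in>S" "fst (snd x) = fst (snd y)" then show "w23 x = w23 y \<and> w12 x = w12 y"
      using priv[of 2 x y] v g by simp
  next
    fix x y assume "x\<in>S" "y\<in>S" "snd (snd x) = snd (snd y)" then show "w31 x = w31 y \<and> w23 x = w23 y"
      using priv[of 3 x y] v g by simp
  next
    fix x y assume "x\<in>S" "y\<in>S" "w12 x = w12 y" "w31 x = w31 y" then show "fst x = fst y"
      using corr[of 1 x y] v g by simp
  next
    fix x y assume "x\<in>S" "y\<in>S" "w23 x = w23 y" "w12 x = w12 y" then show "fst (snd x) = fst (snd y)"
      using corr[of 2 x y] v g by simp
  next
    fix x y assume "x\<in>S" "y\<in>S" "w31 x = w31 y" "w23 x = w23 y" then show "snd (snd x) = snd (snd y)"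
      using corr[of 3 x y] v g by simp
  qed
qed

lemma rho_Inv:
  assumes "Inv S" shows "rho S = 1"
proof -
  from assms have U: "U' S" and L: "L S" unfolding Inv_def by auto
  from upper[OF U] obtain \<psi> where p: "is_3SS S {0,1} (\<lambda>_. 1/2) \<psi>" by blast
  show ?thesis unfolding rho_def
  proof (rule cInf_eq_minimum)
    have "log 2 (real (card {0::nat,1})) = 1" by simp
    then show "1 \<in> {log 2 (real (card R)) | R P \<psi>. is_3SS S R P \<psi>}" using p by force
  next
    fix y assume "y \<in> {log 2 (real (card R)) | R P \<psi>. is_3SS S R P \<psi>}"
    then obtain R P \<psi> where y: "y = log 2 (real (card R))" and s: "is_3SS S R P \<psi>" by blast
    have "2 \<le> card R" by (rule lower[OF s L])
    then have "log 2 2 \<le> log 2 (real (card R))" by (subst log_le_cancel_iff) auto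
    then show "1 \<le> y" using y by simp
  qed
qed

theorem mainTheorem7:
  assumes "S0 \<in> {{(False,False,False),(False,False,True)},
                 {(False,False,False),(False,False,True),(True,True,False)},
                 {(False,False,False),(False,False,True),(True,True,False),(True,True,True)},
                 {(False,False,False),(False,True,True),(True,False,True)},
                 {(False,False,False),(False,True,True),(True,False,True),(True,True,False)}}"
    and "S \<in> equiv_class S0"
  shows "rho S = 1"
  by (rule rho_Inv, rule Inv_class[OF Inv_base[OF assms(1)] assms(2)])
end
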